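(* Let $C\subseteq\mathbb R$ be a compact interval and $g_1,\dots,g_N:C\to\mathbb R$ continuous functions. Suppose there exist $o_i^*\in\operatorname*{argmax}_{o\in C}g_i(o)$, $i=1,\dots,N$, with $o_1^*\ge o_2^*\ge\cdots\ge o_N^*$, such that each $g_i$ is non-decreasing on $C\cap(-\infty,o_i^*]$ and non-increasing on $C\cap[o_i^*,\infty)$. Then $$\sup_{\substack{\bm v\in C^N\\ v_1\le\cdots\le v_N}}\ \sum_{i=1}^N g_i(v_i)=\sup_{v\in C}\ \sum_{i=1}^N g_i(v).$$ *)

theory Defs
  imports "HOL-Analysis.Analysis"
begin

end

theory Submission
  imports Defs
begin

theorem lemma5:
  fixes a b :: real and N :: nat
    and g :: "nat \<Rightarrow> real \<Rightarrow> real" and ostar :: "nat \<Rightarrow> real"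
  assumes "a \<le> b"
    and cont: "\<And>i. i \<in> {1..N} \<Longrightarrow> continuous_on {a..b} (g i)"
    and argmax: "\<And>i. i \<in> {1..N} \<Longrightarrow> ostar i \<in> {a..b} \<and> (\<forall>w\<in>{a..b}. g i w \<le> g i (ostar i))"
    and ord: "\<And>i j. i \<in> {1..N} \<Longrightarrow> j \<in> {1..N} \<Longrightarrow> i \<le> j \<Longrightarrow> ostar j \<le> ostar i"
    and incr: "\<And>i. i \<in> {1..N} \<Longrightarrow> mono_on ({a..b} \<inter> {..ostar i}) (g i)"
    and decr: "\<And>i. i \<in> {1..N} \<Longrightarrow> antimono_on ({a..b} \<inter> {ostar i..}) (g i)"
  shows "(SUP v \<in> {v :: nat \<Rightarrow> real. (\<forall>i\<in>{1..N}. v i \<in> {a..b}) \<and>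
                                     (\<forall>i j. i \<in> {1..N} \<longrightarrow> j \<in> {1..N} \<longrightarrow> i \<le> j \<longrightarrow> v i \<le> v j)}.
            \<Sum>i=1..N. g i (v i))
       = (SUP v \<in> {a..b}. \<Sum>i=1..N. g i v)"
proof -
  define V where "V = {v :: nat \<Rightarrow> real. (\<forall>i\<in>{1..N}. v i \<in> {a..b}) \<and>
                                     (\<forall>i j. i \<in> {1..N} \<longrightarrow> j \<in> {1..N} \<longrightarrow> i \<le> j \<longrightarrow> v i \<le> v j)}"
  define M where "M = (\<Sum>i=1..N. g i (ostar i))"
  have constV: "(\<lambda>_. x) \<in> V" if "x \<in> {a..b}" for x using that by (auto simp: V_def)
  have boundV: "(\<Sum>i=1..N. g i (v i)) \<le> M" if "v \<in> V" for v
    unfolding M_def using that argmax by (intro sum_mono) (auto simp: V_def)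
  have boundC: "(\<Sum>i=1..N. g i x) \<le> M" if "x \<in> {a..b}" for x
    unfolding M_def using that argmax by (intro sum_mono) auto
  have bddV: "bdd_above ((\<lambda>v. \<Sum>i=1..N. g i (v i)) ` V)"
    using boundV by (intro bdd_aboveI2[where M=M]) auto
  have bddC: "bdd_above ((\<lambda>x. \<Sum>i=1..N. g i x) ` {a..b})"
    using boundC by (intro bdd_aboveI2[where M=M]) auto
  have key: "\<exists>w\<in>{a..b}. (\<Sum>i=1..N. g i (v i)) \<le> (\<Sum>i=1..N. g i w)" if v: "v \<in> V" for v
  proof -
    define F where "F = insert a ((\<lambda>j. min (v j) (ostar j)) ` {1..N})"
    define w where "w = Max F"
    have finF: "finite F" "F \<noteq> {}" by (auto simp: F_def)
    have va: "v i \<in> {a..b}" if "i \<in> {1..N}" for i using v that by (auto simp: V_def)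
    have vm: "v i \<le> v j" if "i \<in> {1..N}" "j \<in> {1..N}" "i \<le> j" for i j
      using v that by (auto simp: V_def)
    have wge: "min (v i) (ostar i) \<le> w" if "i \<in> {1..N}" for i
      unfolding w_def using finF that by (intro Max_ge) (auto simp: F_def)
    have wa: "a \<le> w" unfolding w_def using finF by (intro Max_ge) (auto simp: F_def)
    have wb: "w \<le> b" unfolding w_def using finF va argmax
      by (subst Max_le_iff) (auto simp: F_def \<open>a \<le> b\<close> min_le_iff_disj)
    have step: "g i (v i) \<le> g i w" if i: "i \<in> {1..N}" for i
    proof (cases "v i \<le> ostar i")
      case True
      have "w \<le> ostar i" unfolding w_def using finF
      proof (subst Max_le_iff)
        show "\<forall>x\<in>F. x \<le> ostar i"
        proof
          fix x assume "x \<in> F"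
          then consider "x = a" | j where "j \<in> {1..N}" "x = min (v j) (ostar j)"
            by (auto simp: F_def)
          then show "x \<le> ostar i"
          proof cases
            case 1 then show ?thesis using argmax[OF i] by auto
          next
            case 2
            show ?thesis
            proof (cases "i \<le> j")
              case True then show ?thesis using 2 ord[OF i 2(1)] by auto
            next
              case False then show ?thesis using 2 vm[OF 2(1) i] \<open>v i \<le> ostar i\<close> by auto
            qed
          qed
        qed
      qed auto
      moreover have "v i \<le> w" using wge[OF i] True by auto
      ultimately show ?thesis using incr[OF i] va[OF i] wb
        by (intro mono_onD[OF incr[OF i]]) auto
    next
      case False
      have "w \<le> v i" unfolding w_def using finF
      proof (subst Max_le_iff)
        show "\<forall>x\<in>F. x \<le> v i"
        proof
          fix x assume "x \<in> F"
          then consider "x = a" | j where "j \<in> {1..N}" "x = min (v j) (ostar j)"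
            by (auto simp: F_def)
          then show "x \<le> v i"
          proof cases
            case 1 then show ?thesis using va[OF i] by auto
          next
            case 2
            show ?thesis
            proof (cases "i \<le> j")
              case True then show ?thesis using 2 ord[OF i 2(1)] False by auto
            next
              case False then show ?thesis using 2 vm[OF 2(1) i] by auto
            qed
          qed
        qed
      qed auto
      moreover have "ostar i \<le> w" using wge[OF i] False by auto
      ultimately show ?thesis using va[OF i] wa argmax[OF i]
        by (intro monotone_onD[OF decr[OF i]]) auto
    qed
    show ?thesis using wa wb step by (intro bexI[of _ w] sum_mono) auto
  qed
  have ne: "{a..b} \<noteq> {}" using \<open>a \<le> b\<close> by auto
  have neV: "V \<noteq> {}" using constV[of a] \<open>a \<le> b\<close> by auto
  have "(SUP v\<in>V. \<Sum>i=1..N. g i (v i)) \<le> (SUP v \<in> {a..b}. \<Sum>i=1..N. g i v)"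
  proof (rule cSUP_least[OF neV])
    fix v assume "v \<in> V"
    then obtain w where "w \<in> {a..b}" "(\<Sum>i=1..N. g i (v i)) \<le> (\<Sum>i=1..N. g i w)"
      using key by blast
    then show "(\<Sum>i=1..N. g i (v i)) \<le> (SUP v \<in> {a..b}. \<Sum>i=1..N. g i v)"
      using cSUP_upper2[OF bddC] by blast
  qed
  moreover have "(SUP v \<in> {a..b}. \<Sum>i=1..N. g i v) \<le> (SUP v\<in>V. \<Sum>i=1..N. g i (v i))"
  proof (rule cSUP_least[OF ne])
    fix x assume "x \<in> {a..b}"
    then show "(\<Sum>i=1..N. g i x) \<le> (SUP v\<in>V. \<Sum>i=1..N. g i (v i))"
      using cSUP_upper[OF constV bddV] by fastforce
  qed
  ultimately show ?thesis unfolding V_def by (rule antisym)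
qed

end
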